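(* Let $x_1,\dots,x_N\in\mathbb{R}^d$ be sample points, let $(\mathcal F_\tau)_{\tau\ge 0}$ be the evolution maps of a dynamical system on $\mathbb{R}^d$, and let $g:\mathbb{R}^d\to\mathbb{R}^{1\times L}$ be a smooth observation function, with Koopman operator $\mathcal K_\tau(g)(x)=g(\mathcal F_\tau(x))$. Suppose there are finitely many scalars $\lambda_1,\dots,\lambda_R\in\mathbb{C}$, smooth scalar functions $\phi_1,\dots,\phi_R$ and row vectors $v_1^\ast,\dots,v_R^\ast\in\mathbb{C}^{1\times L}$ such that there is zero Koopman estimation error, i.e. $$\mathcal K_\tau(g)(x)=\sum_{m=1}^R e^{\tau\lambda_m}\phi_m(x)\,v_m^\ast$$ for all $x$ and all $\tau\ge 0$. Define the $d\times L$ matrices $J(x)=\sum_{m=1}^R\lambda_m\nabla\phi_m(x)\,v_m^\ast$, let $h>0$, $\sigma>0$, and set $$M=\frac{1}{(h\sigma)^2}\sum_{n=1}^N J(x_n)J(x_n)^\ast,$$ assumed invertible. Introduce the changed variables $\tilde x=M^{1/2}x$, $\tilde g(\tilde x)=g(x)$, $\tilde x_n=M^{1/2}x_n$, $\tilde y_n=M^{1/2}y_n$ with $y_n=\mathcal F_\tau(x_n)$, and $$\tilde J(\tilde x_n)=\lim_{\tau\to 0}\tau^{-1}\big[\nabla\tilde g(\tilde y_n)-\nabla\tilde g(\tilde x_n)\big].$$ Then the function defined on unit vectors $u$ by $$f(u)=\frac1N\sum_{n=1}^N\big|u^\ast\tilde J(\tilde x_n)\big|^2$$ is constant.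
   Context: All functions are assumed smooth enough for the derivatives and limits to make sense. Gradients $\nabla$ of a $1\times L$ row-vector-valued function are $d\times L$ matrices (gradient of each component as a column); $\nabla\tilde g$ denotes the gradient with respect to the variable $\tilde x$. $M^{1/2}$ is the Hermitian positive square root of the Hermitian positive definite matrix $M$, and $^\ast$ denotes conjugate transpose. *)

theory Defs
  imports "HOL-Analysis.Analysis"
begin

definition cstar :: "complex^'n^'m \<Rightarrow> complex^'m^'n" where
  "cstar A = (\<chi> i j. cnj (A $ j $ i))"

definition hermitian :: "complex^'n^'n \<Rightarrow> bool" where
  "hermitian A \<longleftrightarrow> cstar A = A"

definition pos_def :: "complex^'n^'n \<Rightarrow> bool" where
  "pos_def A \<longleftrightarrow> (\<forall>v::complex^'n. v \<noteq> 0 \<longrightarrow>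
      0 < Re (\<Sum>i\<in>UNIV. \<Sum>j\<in>UNIV. cnj (v $ i) * A $ i $ j * v $ j))"

definition msqrt :: "complex^'n^'n \<Rightarrow> complex^'n^'n" where
  "msqrt M = (THE S. hermitian S \<and> pos_def S \<and> S ** S = M)"

definition cgrad :: "(real^'d \<Rightarrow> complex) \<Rightarrow> real^'d \<Rightarrow> complex^'d" where
  "cgrad f x = (\<chi> i. frechet_derivative f (at x) (axis i 1))"

definition rowgrad :: "(real^'d \<Rightarrow> real^'l) \<Rightarrow> real^'d \<Rightarrow> complex^'l^'d" where
  "rowgrad G x = (\<chi> i j. complex_of_real (frechet_derivative G (at x) (axis i 1) $ j))"

end

theory Submission
  imports Defs
begin


definition cinner :: "complex^'n \<Rightarrow> complex^'n \<Rightarrow> complex" where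
  "cinner x y = (\<Sum>i\<in>UNIV. x$i * cnj (y$i))"

lemma inner_cinner: "(x::complex^'n) \<bullet> y = Re (cinner x y)"
  by (simp add: cinner_def inner_vec_def inner_complex_def Re_sum)

lemma cinner_self: "cinner x x = complex_of_real ((norm x)\<^sup>2)"
proof -
  have "(norm x)\<^sup>2 = (\<Sum>i\<in>UNIV. (norm (x$i))\<^sup>2)"
    by (simp add: norm_vec_def L2_set_def sum_nonneg)
  then show ?thesis
    by (simp add: cinner_def complex_norm_square[symmetric] of_real_sum)
qed

lemma cinner_add_left: "cinner (x + y) z = cinner x z + cinner y z"
  by (simp add: cinner_def distrib_right sum.distrib)
lemma cinner_diff_left: "cinner (x - y) z = cinner x z - cinner y z"
  by (simp add: cinner_def left_diff_distrib sum_subtractf)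
lemma cinner_scale_left: "cinner (c *s x) y = c * cinner x y"
  by (simp add: cinner_def sum_distrib_left mult.assoc)
lemma cinner_scale_right: "cinner x (c *s y) = cnj c * cinner x y"
  by (simp add: cinner_def sum_distrib_left algebra_simps)
lemma vscaleR: "((c::real) *\<^sub>R (x::complex^'n)) $ i = of_real c * x $ i"
  by (subst vector_scaleR_component) (rule scaleR_conv_of_real)
lemma cinner_scaleR_left: "cinner (c *\<^sub>R x) y = of_real c * cinner x y"
  by (simp add: cinner_def sum_distrib_left vscaleR mult.assoc del: vector_scaleR_component)
lemma cinner_commute: "cinner y x = cnj (cinner x y)"
  by (simp add: cinner_def mult.commute)
lemma cinner_sum_left: "cinner (\<Sum>e\<in>E. f e) y = (\<Sum>e\<in>E. cinner (f e) y)"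
  by (induction E rule: infinite_finite_induct) (auto simp: cinner_add_left cinner_def distrib_right sum.distrib)
lemma cinner_zero_left[simp]: "cinner 0 y = 0"
  by (simp add: cinner_def)

lemma mv_scale: "(M::complex^'n^'m) *v (c *s x) = c *s (M *v x)"
  by (simp add: matrix_vector_mult_def vec_eq_iff sum_distrib_left algebra_simps)
lemma mv_scaleR: "(M::complex^'n^'m) *v (c *\<^sub>R x) = c *\<^sub>R (M *v x)"
  by (simp add: matrix_vector_mult_def vec_eq_iff sum_distrib_left vscaleR algebra_simps del: vector_scaleR_component)
lemma mv_sum: "(M::complex^'n^'m) *v (\<Sum>e\<in>E. f e) = (\<Sum>e\<in>E. M *v f e)"
  by (induction E rule: infinite_finite_induct) (auto simp: matrix_vector_right_distrib)

lemma qf_cinner: "(\<Sum>i\<in>UNIV. \<Sum>j\<in>UNIV. cnj (v $ i) * A $ i $ j * v $ j) = cinner (A *v v) v"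
  by (simp add: cinner_def matrix_vector_mult_def sum_distrib_left sum_distrib_right algebra_simps)

lemma herm_cinner:
  assumes "hermitian M"
  shows "cinner (M *v x) y = cinner x (M *v y)"
proof -
  have M: "\<And>i j. cnj (M $ j $ i) = M $ i $ j"
    using assms unfolding hermitian_def cstar_def vec_eq_iff by (metis vec_lambda_beta)
  have "cinner (M *v x) y = (\<Sum>i\<in>UNIV. \<Sum>j\<in>UNIV. M$i$j * x$j * cnj (y$i))"
    by (simp add: cinner_def matrix_vector_mult_def sum_distrib_right)
  also have "\<dots> = (\<Sum>j\<in>UNIV. \<Sum>i\<in>UNIV. M$i$j * x$j * cnj (y$i))"
    by (rule sum.swap)
  also have "\<dots> = cinner x (M *v y)"
    by (simp add: cinner_def matrix_vector_mult_def sum_distrib_left M algebra_simps)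
  finally show ?thesis .
qed

lemma herm_inner:
  assumes "hermitian M"
  shows "(M *v x) \<bullet> y = x \<bullet> (M *v y)"
  using herm_cinner[OF assms] by (simp add: inner_cinner)

lemma mv_linear: "linear (\<lambda>x. (M::complex^'n^'m) *v x)"
  by (rule linearI) (simp_all add: matrix_vector_right_distrib mv_scaleR)

lemma exists_eigen:
  fixes M :: "complex^'n^'n" and W :: "(complex^'n) set"
  assumes herm: "hermitian M" and sub: "subspace W" and inv: "\<And>x. x \<in> W \<Longrightarrow> M *v x \<in> W"
    and x0: "x0 \<in> W" "x0 \<noteq> 0"
  shows "\<exists>v\<in>W. norm v = 1 \<and> M *v v = ((M *v v) \<bullet> v) *\<^sub>R v"
proof -
  define q where "q x = (M *v x) \<bullet> x" for x
  define K where "K = W \<inter> sphere 0 1"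
  have cK: "compact K" unfolding K_def
    using closed_subspace[OF sub] compact_sphere by (rule closed_Int_compact)
  have "(inverse (norm x0)) *\<^sub>R x0 \<in> K"
    using x0 subspace_scale[OF sub] by (auto simp: K_def)
  then have neK: "K \<noteq> {}" by blast
  have bl: "bounded_linear (\<lambda>x. M *v x)"
    using mv_linear linear_conv_bounded_linear by blast
  have "continuous_on UNIV (\<lambda>x. M *v x)"
    by (rule linear_continuous_on[OF bl])
  then have cq: "continuous_on K q" unfolding q_def
    by (intro continuous_on_inner continuous_on_id) (auto intro: continuous_on_subset)
  obtain v where vK: "v \<in> K" and vmax: "\<And>y. y \<in> K \<Longrightarrow> q y \<le> q v"
    using continuous_attains_sup[OF cK neK cq] by blast
  define \<mu> where "\<mu> = q v"
  define w where "w = M *v v - \<mu> *\<^sub>R v"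
  have vW: "v \<in> W" and nv: "norm v = 1" using vK by (auto simp: K_def)
  have vv: "v \<bullet> v = 1" using nv by (simp add: power2_norm_eq_inner[symmetric])
  have wW: "w \<in> W" unfolding w_def
    by (intro subspace_diff[OF sub] subspace_scale[OF sub] inv vW)
  have wv: "w \<bullet> v = 0"
    by (simp add: w_def inner_diff_left vv \<mu>_def q_def)
  have Mvw: "(M *v v) \<bullet> w = w \<bullet> w"
  proof -
    have "M *v v = w + \<mu> *\<^sub>R v" by (simp add: w_def)
    moreover have "v \<bullet> w = 0" using wv by (simp add: inner_commute)
    ultimately show ?thesis by (simp add: inner_add_left)
  qed
  have Mwv: "(M *v w) \<bullet> v = w \<bullet> w"
    using herm_inner[OF herm, of w v] Mvw by (simp add: inner_commute)
  have key: "2*t*(w \<bullet> w) + t\<^sup>2 * q w \<le> \<mu> * t\<^sup>2 * (w \<bullet> w)" if t: "t > 0" for t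
  proof -
    define x where "x = v + t *\<^sub>R w"
    have xW: "x \<in> W" unfolding x_def
      by (intro subspace_add[OF sub] subspace_scale[OF sub] vW wW)
    have nx: "(norm x)\<^sup>2 = 1 + t\<^sup>2 * (w \<bullet> w)"
    proof -
      have "(norm x)\<^sup>2 = x \<bullet> x" by (simp add: power2_norm_eq_inner)
      also have "\<dots> = 1 + t\<^sup>2 * (w \<bullet> w)"
        by (simp add: x_def inner_add_left inner_add_right vv wv inner_commute[of v w] power2_eq_square)
      finally show ?thesis .
    qed
    have ww0: "w \<bullet> w \<ge> 0" by simp
    have "(norm x)\<^sup>2 > 0" using nx ww0 by (smt (verit) mult_nonneg_nonneg zero_le_power2)
    then have nx0: "norm x > 0" by simp
    define y where "y = inverse (norm x) *\<^sub>R x"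
    have "y \<in> K" using xW nx0 subspace_scale[OF sub] by (auto simp: K_def y_def)
    then have "q y \<le> \<mu>" using vmax \<mu>_def by blast
    moreover have "q y = q x / (norm x)\<^sup>2"
      by (simp add: q_def y_def mv_scaleR power2_eq_square divide_inverse)
    ultimately have "q x \<le> \<mu> * (norm x)\<^sup>2"
      using nx0 by (simp add: divide_le_eq)
    moreover have "q x = \<mu> + 2*t*(w \<bullet> w) + t\<^sup>2 * q w"
      by (simp add: q_def x_def matrix_vector_right_distrib mv_scaleR inner_add_left inner_add_right
          Mvw Mwv \<mu>_def[unfolded q_def] power2_eq_square algebra_simps)
    ultimately show ?thesis using nx by (simp add: algebra_simps)
  qed
  have "w \<bullet> w = 0"
  proof (rule ccontr)
    assume "w \<bullet> w \<noteq> 0"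
    then have wpos: "w \<bullet> w > 0" using inner_ge_zero[of w] by linarith
    define C where "C = \<bar>q w\<bar> + \<bar>\<mu>\<bar> * (w \<bullet> w) + 1"
    have Cpos: "C > 0" unfolding C_def using wpos by (smt (verit) abs_ge_zero mult_nonneg_nonneg)
    define t where "t = (w \<bullet> w) / C"
    have tpos: "t > 0" using wpos Cpos by (simp add: t_def)
    have k: "2*t*(w \<bullet> w) \<le> t\<^sup>2 * (\<mu> * (w \<bullet> w) - q w)"
      using key[OF tpos] by (simp add: algebra_simps)
    have "\<mu> * (w \<bullet> w) - q w < C" unfolding C_def
      using wpos by (smt (verit) abs_ge_zero abs_mult_self_eq abs_le_D1 mult_right_mono abs_ge_self abs_of_pos)
    then have "t\<^sup>2 * (\<mu> * (w \<bullet> w) - q w) < t\<^sup>2 * C" using tpos by simp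
    also have "\<dots> = t * (w \<bullet> w)" using Cpos by (simp add: t_def power2_eq_square)
    finally have "2*t*(w \<bullet> w) < t * (w \<bullet> w)" using k by linarith
    then have "2*(t*(w \<bullet> w)) < t * (w \<bullet> w)" by (simp add: mult.assoc)
    then show False using mult_pos_pos[OF tpos wpos] by linarith
  qed
  then have "w = 0" by simp
  then have "M *v v = \<mu> *\<^sub>R v" by (simp add: w_def)
  then show ?thesis using vW nv by (auto simp: \<mu>_def q_def)
qed

definition onb_eig :: "complex^'n^'n \<Rightarrow> (complex^'n) set \<Rightarrow> bool" where
  "onb_eig M E \<longleftrightarrow> finite E \<and> (\<forall>e\<in>E. \<forall>e'\<in>E. cinner e e' = (if e = e' then 1 else 0))
     \<and> (\<forall>e\<in>E. \<exists>\<mu>::real. M *v e = of_real \<mu> *s e)"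

lemma onb_card:
  fixes E :: "(complex^'n) set"
  assumes "onb_eig M E"
  shows "card E \<le> DIM(complex^'n)"
proof -
  have "pairwise orthogonal E"
    using assms unfolding onb_eig_def pairwise_def orthogonal_def by (auto simp: inner_cinner)
  moreover have "0 \<notin> E"
  proof -
    have "e \<noteq> 0" if "e \<in> E" for e
    proof
      assume "e = 0"
      have "cinner e e = 1" using assms that unfolding onb_eig_def by simp
      then show False using \<open>e = 0\<close> by simp
    qed
    then show ?thesis by blast
  qed
  ultimately have "independent E" by (rule pairwise_orthogonal_independent)
  then show ?thesis using independent_bound by blast
qed

lemma scaleR_vs: "(r::real) *\<^sub>R (v::complex^'n) = of_real r *s v"
  by (simp add: vec_eq_iff vscaleR del: vector_scaleR_component)

lemma exists_complete_onb:
  fixes M :: "complex^'n^'n"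
  assumes herm: "hermitian M"
  shows "\<exists>E. onb_eig M E \<and> (\<forall>x. x = (\<Sum>e\<in>E. cinner x e *s e))"
proof -
  define P where "P k \<longleftrightarrow> (\<exists>E. onb_eig M E \<and> card E = k)" for k
  have "P 0" unfolding P_def by (rule exI[of _ "{}"]) (simp add: onb_eig_def)
  moreover have "\<forall>y. P y \<longrightarrow> y \<le> DIM(complex^'n)"
    unfolding P_def using onb_card by blast
  ultimately obtain k where Pk: "P k" and kmax: "\<And>y. P y \<Longrightarrow> y \<le> k"
    using Nat.ex_has_greatest_nat[of P 0 "DIM(complex^'n)"] by blast
  from Pk obtain E where E: "onb_eig M E" and cE: "card E = k" unfolding P_def by blast
  have fE: "finite E" and orth: "\<And>e e'. e \<in> E \<Longrightarrow> e' \<in> E \<Longrightarrow> cinner e e' = (if e = e' then 1 else 0)"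
    and eig: "\<And>e. e \<in> E \<Longrightarrow> \<exists>\<mu>::real. M *v e = of_real \<mu> *s e"
    using E unfolding onb_eig_def by auto
  define W where "W = {z. \<forall>e\<in>E. cinner z e = 0}"
  have sub: "subspace W"
    unfolding subspace_def W_def by (simp add: cinner_add_left cinner_scaleR_left)
  have inv: "M *v z \<in> W" if "z \<in> W" for z
  proof -
    { fix e assume e: "e \<in> E"
      then obtain \<mu> :: real where "M *v e = of_real \<mu> *s e" using eig by blast
      then have "cinner (M *v z) e = cnj (of_real \<mu>) * cinner z e"
        by (simp add: herm_cinner[OF herm] cinner_scale_right)
      then have "cinner (M *v z) e = 0" using that e by (simp add: W_def) }
    then show ?thesis by (simp add: W_def)
  qed
  have "x = (\<Sum>e\<in>E. cinner x e *s e)" for x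
  proof (rule ccontr)
    assume ne: "x \<noteq> (\<Sum>e\<in>E. cinner x e *s e)"
    define y where "y = x - (\<Sum>e\<in>E. cinner x e *s e)"
    have y0: "y \<noteq> 0" using ne by (simp add: y_def)
    have yW: "y \<in> W"
    proof -
      { fix e' assume e': "e' \<in> E"
        have "cinner y e' = cinner x e' - (\<Sum>e\<in>E. cinner x e * cinner e e')"
          by (simp add: y_def cinner_diff_left cinner_sum_left cinner_scale_left)
        also have "(\<Sum>e\<in>E. cinner x e * cinner e e') = (\<Sum>e\<in>E. if e = e' then cinner x e else 0)"
          by (rule sum.cong) (auto simp: orth e')
        also have "\<dots> = cinner x e'" using fE e' by simp
        finally have "cinner y e' = 0" by simp }
      then show ?thesis by (simp add: W_def)
    qed
    obtain v where vW: "v \<in> W" and nv: "norm v = 1" and Mv: "M *v v = ((M *v v) \<bullet> v) *\<^sub>R v"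
      using exists_eigen[OF herm sub inv yW y0] by blast
    have vv: "cinner v v = 1" using nv by (simp add: cinner_self)
    have ve: "cinner v e = 0" if "e \<in> E" for e using vW that by (simp add: W_def)
    have ev: "cinner e v = 0" if "e \<in> E" for e using ve[OF that] cinner_commute[of e v] by simp
    have vE: "v \<notin> E"
    proof
      assume "v \<in> E"
      then have "cinner v v = 0" using ve by blast
      then show False using vv by simp
    qed
    have "onb_eig M (insert v E)"
      unfolding onb_eig_def
    proof (intro conjI ballI)
      show "finite (insert v E)" using fE by simp
    next
      fix e e' assume e: "e \<in> insert v E" and e': "e' \<in> insert v E"
      show "cinner e e' = (if e = e' then 1 else 0)"
      proof (cases "e = v")
        case True
        then show ?thesis
        proof (cases "e' = v")
          case True
          then show ?thesis using \<open>e = v\<close> vv by simp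
        next
          case False
          then have "e' \<in> E" using e' by simp
          then show ?thesis using \<open>e = v\<close> ve False by simp
        qed
      next
        case False
        then have eE: "e \<in> E" using e by simp
        show ?thesis
        proof (cases "e' = v")
          case True
          then show ?thesis using eE ev False by simp
        next
          case False
          then have "e' \<in> E" using e' by simp
          then show ?thesis using eE orth by blast
        qed
      qed
    next
      fix e assume e: "e \<in> insert v E"
      show "\<exists>\<mu>::real. M *v e = of_real \<mu> *s e"
      proof (cases "e = v")
        case True
        then show ?thesis using Mv scaleR_vs[of "(M *v v) \<bullet> v" v] by (intro exI[of _ "(M *v v) \<bullet> v"]) simp
      next
        case False
        then show ?thesis using e eig by simp
      qed
    qed
    then have "P (Suc k)" unfolding P_def using vE fE cE by (intro exI[of _ "insert v E"]) simp
    then show False using kmax[of "Suc k"] by simp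
  qed
  then show ?thesis using E by blast
qed

lemma zcnj: "z * cnj z = (complex_of_real (cmod z))\<^sup>2"
  by (simp add: complex_norm_square[symmetric])

lemma msqrt_props:
  fixes M :: "complex^'n^'n"
  assumes herm: "hermitian M" and pd: "pos_def M"
  shows "hermitian (msqrt M) \<and> pos_def (msqrt M) \<and> msqrt M ** msqrt M = M"
proof -
  obtain E where E: "onb_eig M E" and cplt: "\<And>x. x = (\<Sum>e\<in>E. cinner x e *s e)"
    using exists_complete_onb[OF herm] by blast
  have fE: "finite E" and orth: "\<And>e e'. e \<in> E \<Longrightarrow> e' \<in> E \<Longrightarrow> cinner e e' = (if e = e' then 1 else 0)"
    and eig0: "\<And>e. e \<in> E \<Longrightarrow> \<exists>\<mu>::real. M *v e = of_real \<mu> *s e"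
    using E unfolding onb_eig_def by auto
  have ee: "cinner e e = 1" if "e \<in> E" for e using orth[OF that that] by simp
  define \<mu> where "\<mu> e = Re (cinner (M *v e) e)" for e
  have eig: "M *v e = of_real (\<mu> e) *s e" if e: "e \<in> E" for e
  proof -
    obtain m :: real where m: "M *v e = of_real m *s e" using eig0[OF e] by blast
    then have "cinner (M *v e) e = of_real m" by (simp add: cinner_scale_left ee[OF e])
    then have "\<mu> e = m" by (simp add: \<mu>_def)
    then show ?thesis using m by simp
  qed
  have \<mu>pos: "\<mu> e > 0" if e: "e \<in> E" for e
  proof -
    have "e \<noteq> 0" using ee[OF e] by auto
    then have "0 < Re (\<Sum>i\<in>UNIV. \<Sum>j\<in>UNIV. cnj (e $ i) * M $ i $ j * e $ j)"
      using pd unfolding pos_def_def by blast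
    then show ?thesis by (simp add: qf_cinner \<mu>_def)
  qed
  define s where "s e = sqrt (\<mu> e)" for e
  have spos: "s e > 0" if "e \<in> E" for e using \<mu>pos[OF that] by (simp add: s_def)
  have ss: "of_real (s e) * of_real (s e) = (of_real (\<mu> e) :: complex)" if "e \<in> E" for e
    using \<mu>pos[OF that] by (simp add: s_def flip: of_real_mult)
  define S :: "complex^'n^'n" where "S = (\<chi> i j. \<Sum>e\<in>E. of_real (s e) * e$i * cnj (e$j))"
  have Sv: "S *v x = (\<Sum>e\<in>E. (of_real (s e) * cinner x e) *s e)" for x
  proof -
    have "(S *v x) $ i = (\<Sum>e\<in>E. (of_real (s e) * cinner x e) * e $ i)" for i
    proof -
      have "(S *v x) $ i = (\<Sum>j\<in>UNIV. \<Sum>e\<in>E. of_real (s e) * e$i * cnj (e$j) * x $ j)"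
        by (simp add: S_def matrix_vector_mult_def sum_distrib_right)
      also have "\<dots> = (\<Sum>e\<in>E. \<Sum>j\<in>UNIV. of_real (s e) * e$i * cnj (e$j) * x $ j)"
        by (rule sum.swap)
      also have "\<dots> = (\<Sum>e\<in>E. (of_real (s e) * cinner x e) * e $ i)"
        by (simp add: cinner_def sum_distrib_left sum_distrib_right algebra_simps)
      finally show ?thesis .
    qed
    then show ?thesis by (simp add: vec_eq_iff)
  qed
  have Se: "S *v e = of_real (s e) *s e" if e: "e \<in> E" for e
  proof -
    have "S *v e = (\<Sum>e'\<in>E. if e' = e then of_real (s e) *s e else 0)"
      unfolding Sv by (rule sum.cong) (auto simp: orth e)
    also have "\<dots> = of_real (s e) *s e" using fE e by simp
    finally show ?thesis .
  qed
  have Mv: "M *v x = (\<Sum>e\<in>E. (of_real (\<mu> e) * cinner x e) *s e)" for x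
  proof -
    have "M *v x = M *v (\<Sum>e\<in>E. cinner x e *s e)" using cplt[of x] by simp
    also have "\<dots> = (\<Sum>e\<in>E. cinner x e *s (M *v e))" by (simp add: mv_sum mv_scale)
    also have "\<dots> = (\<Sum>e\<in>E. (of_real (\<mu> e) * cinner x e) *s e)"
      by (rule sum.cong) (auto simp: eig mult.commute)
    finally show ?thesis .
  qed
  have SS: "S ** S = M"
  proof -
    have "(S ** S) *v x = M *v x" for x
    proof -
      have "(S ** S) *v x = S *v (S *v x)" by (simp add: matrix_vector_mul_assoc)
      also have "\<dots> = (\<Sum>e\<in>E. (of_real (s e) * cinner x e) *s (S *v e))"
        by (simp add: Sv[of x] mv_sum mv_scale)
      also have "\<dots> = (\<Sum>e\<in>E. (of_real (\<mu> e) * cinner x e) *s e)"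
        by (rule sum.cong) (auto simp: Se ss[symmetric] algebra_simps)
      finally show ?thesis using Mv by simp
    qed
    then show ?thesis by (simp add: matrix_eq)
  qed
  have hS: "hermitian S"
    unfolding hermitian_def cstar_def S_def by (simp add: vec_eq_iff algebra_simps)
  have pS: "pos_def S"
    unfolding pos_def_def
  proof (intro allI impI)
    fix v :: "complex^'n" assume v0: "v \<noteq> 0"
    have q: "(\<Sum>i\<in>UNIV. \<Sum>j\<in>UNIV. cnj (v $ i) * S $ i $ j * v $ j) =
          (\<Sum>e\<in>E. of_real (s e * (cmod (cinner v e))\<^sup>2))"
    proof -
      have "(\<Sum>i\<in>UNIV. \<Sum>j\<in>UNIV. cnj (v $ i) * S $ i $ j * v $ j) = cinner (S *v v) v"
        by (rule qf_cinner)
      also have "\<dots> = (\<Sum>e\<in>E. of_real (s e) * cinner v e * cinner e v)"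
        by (simp add: Sv cinner_sum_left cinner_scale_left)
      also have "\<dots> = (\<Sum>e\<in>E. of_real (s e * (cmod (cinner v e))\<^sup>2))"
        by (rule sum.cong) (simp_all add: cinner_commute[of e v for e] zcnj mult.assoc)
      finally show ?thesis .
    qed
    obtain e where e: "e \<in> E" and ne: "cinner v e \<noteq> 0"
    proof (rule ccontr)
      assume "\<not> thesis"
      then have "\<forall>e\<in>E. cinner v e = 0" using that by blast
      then have "v = 0" using cplt[of v] by simp
      then show False using v0 by simp
    qed
    have nn: "0 \<le> s e' * (cmod (cinner v e'))\<^sup>2" if "e' \<in> E" for e'
      using spos[OF that] by simp
    have "0 < s e * (cmod (cinner v e))\<^sup>2" using spos[OF e] ne by simp
    then have "0 < (\<Sum>e\<in>E. s e * (cmod (cinner v e))\<^sup>2)"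
      by (rule sum_pos2[OF fE e, where f="\<lambda>e. s e * (cmod (cinner v e))\<^sup>2", OF _ nn]) simp
    then show "0 < Re (\<Sum>i\<in>UNIV. \<Sum>j\<in>UNIV. cnj (v $ i) * S $ i $ j * v $ j)"
      by (simp add: q Re_sum)
  qed
  have uniq: "T = S" if pT: "pos_def T" and TT: "T ** T = M" for T
  proof -
    have Te: "T *v e = of_real (s e) *s e" if e: "e \<in> E" for e
    proof (rule ccontr)
      assume ne: "T *v e \<noteq> of_real (s e) *s e"
      define y where "y = T *v e - of_real (s e) *s e"
      have y0: "y \<noteq> 0" using ne by (simp add: y_def)
      have "T *v y + of_real (s e) *s y = (T ** T) *v e - (of_real (s e) * of_real (s e)) *s e"
        by (simp add: y_def matrix_vector_mult_diff_distrib mv_scale matrix_vector_mul_assoc algebra_simps)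
      also have "\<dots> = 0" using TT eig[OF e] ss[OF e] by simp
      finally have z: "T *v y + of_real (s e) *s y = 0" .
      have "cinner (T *v y) y + of_real (s e) * cinner y y = 0"
        using arg_cong[OF z, of "\<lambda>z. cinner z y"] by (simp add: cinner_add_left cinner_scale_left)
      then have "Re (cinner (T *v y) y + of_real (s e) * cinner y y) = 0" by simp
      then have "Re (cinner (T *v y) y) + s e * (norm y)\<^sup>2 = 0"
        by (simp only: cinner_self plus_complex.sel Re_complex_of_real flip: of_real_mult)
      moreover have "0 < Re (cinner (T *v y) y)"
        using pT y0 unfolding pos_def_def qf_cinner by blast
      moreover have "0 \<le> s e * (norm y)\<^sup>2" using spos[OF e] by simp
      ultimately show False by linarith
    qed
    have "T *v x = S *v x" for x
    proof -
      have "T *v x = T *v (\<Sum>e\<in>E. cinner x e *s e)" using cplt[of x] by simp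
      also have "\<dots> = (\<Sum>e\<in>E. cinner x e *s (T *v e))" by (simp add: mv_sum mv_scale)
      also have "\<dots> = S *v x" unfolding Sv
        by (rule sum.cong) (auto simp: Te mult.commute)
      finally show ?thesis .
    qed
    then show ?thesis by (simp add: matrix_eq)
  qed
  have "msqrt M = S"
    unfolding msqrt_def
  proof (rule the_equality)
    show "hermitian S \<and> pos_def S \<and> S ** S = M" using hS pS SS by blast
  next
    fix T assume "hermitian T \<and> pos_def T \<and> T ** T = M"
    then show "T = S" using uniq by blast
  qed
  then show ?thesis using hS pS SS by simp
qed



lemma mscaleR: "((c::real) *\<^sub>R (A::complex^'n^'m)) $ i $ j = of_real c * A $ i $ j"
  by (simp only: vector_scaleR_component) (rule scaleR_conv_of_real)

lemma rvscale: "((r::real) *\<^sub>R (b::real^'l)) $ j = r * b $ j"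
  by simp

lemma matrix_add_rdistrib': "((A::'a::semiring_1^'n^'m) + B) ** C = (A ** C) + (B ** C)"
  by (vector matrix_matrix_mult_def sum.distrib[symmetric] field_simps)

lemma msum_left: "(\<Sum>n\<in>N. A n) ** (B::'a::semiring_1^'p^'n) = (\<Sum>n\<in>N. A n ** B)"
  by (induction N rule: infinite_finite_induct) (auto simp: matrix_add_rdistrib')

lemma msum_right: "(B::'a::semiring_1^'n^'m) ** (\<Sum>n\<in>N. A n) = (\<Sum>n\<in>N. B ** A n)"
  by (induction N rule: infinite_finite_induct) (auto simp: matrix_add_ldistrib)

lemma mvsum_left: "(\<Sum>n\<in>N. A n) *v (x::'a::semiring_1^'n) = (\<Sum>n\<in>N. A n *v x)"
  by (induction N rule: infinite_finite_induct) (auto simp: matrix_vector_mult_add_rdistrib)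

lemma cstar_mult: "cstar ((A::complex^'n^'m) ** B) = cstar B ** cstar A"
  by (simp add: cstar_def matrix_matrix_mult_def vec_eq_iff mult.commute)

lemma cstar_cstar[simp]: "cstar (cstar A) = A"
  by (simp add: cstar_def vec_eq_iff)

lemma cstar_mat1: "cstar (mat 1 :: complex^'n^'n) = mat 1"
  by (simp add: cstar_def mat_def vec_eq_iff)

lemma adj_cinner: "cinner ((A::complex^'n^'m) *v x) y = cinner x (cstar A *v y)"
proof -
  have "cinner (A *v x) y = (\<Sum>i\<in>UNIV. \<Sum>j\<in>UNIV. A$i$j * x$j * cnj (y$i))"
    by (simp add: cinner_def matrix_vector_mult_def sum_distrib_right)
  also have "\<dots> = (\<Sum>j\<in>UNIV. \<Sum>i\<in>UNIV. A$i$j * x$j * cnj (y$i))"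
    by (rule sum.swap)
  also have "\<dots> = cinner x (cstar A *v y)"
    by (simp add: cinner_def matrix_vector_mult_def sum_distrib_left cstar_def algebra_simps)
  finally show ?thesis .
qed

lemma norm_cnj_vec: "norm (\<chi> j. cnj ((x::complex^'n) $ j)) = norm x"
  by (simp add: norm_vec_def)

lemma exp_lim:
  "((\<lambda>\<tau>::real. complex_of_real (1/\<tau>) * (exp (complex_of_real \<tau> * l) - 1)) \<longlongrightarrow> l) (at_right 0)"
proof -
  have "((\<lambda>z. exp (z * l)) has_field_derivative (exp (0 * l) * l)) (at 0)"
    by (auto intro!: derivative_eq_intros)
  then have lim: "((\<lambda>z. (exp (z * l) - 1) / z) \<longlongrightarrow> l) (at (0::complex))"
    by (simp add: has_field_derivative_iff)
  have "((\<lambda>\<tau>. complex_of_real \<tau>) \<longlongrightarrow> complex_of_real 0) (at_right 0)"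
    by (intro tendsto_intros)
  moreover have "\<forall>\<^sub>F \<tau> in at_right 0. complex_of_real \<tau> \<noteq> 0"
    using eventually_at_right_less[of "0::real"] by (rule eventually_mono) simp
  ultimately have fl: "filterlim (\<lambda>\<tau>. complex_of_real \<tau>) (at 0) (at_right 0)"
    by (intro filterlim_atI) simp_all
  have "((\<lambda>\<tau>. (exp (complex_of_real \<tau> * l) - 1) / complex_of_real \<tau>) \<longlongrightarrow> l) (at_right 0)"
    using filterlim_compose[OF lim fl] by simp
  then show ?thesis by (simp add: divide_inverse mult.commute of_real_inverse)
qed

lemma vscaleR': "((c::real) *\<^sub>R (x::complex^'n)) = (\<chi> i. of_real c * x $ i)"
  by (simp add: vec_eq_iff vscaleR del: vector_scaleR_component)

lemma rowgrad_eq: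
  fixes G :: "real^'d \<Rightarrow> real^'l" and \<Phi> :: "nat \<Rightarrow> real^'d \<Rightarrow> complex"
    and c :: "nat \<Rightarrow> complex" and vs :: "nat \<Rightarrow> complex^'l"
  assumes Gd: "G differentiable (at x)"
    and \<Phi>d: "\<And>m. m < r \<Longrightarrow> \<Phi> m differentiable (at x)"
    and eq: "\<And>y. (\<chi> j. complex_of_real (G y $ j)) = (\<Sum>m<r. (c m * \<Phi> m y) *s vs m)"
  shows "rowgrad G x = (\<chi> i j. \<Sum>m<r. c m * cgrad (\<Phi> m) x $ i * vs m $ j)"
proof -
  define D where "D = frechet_derivative G (at x)"
  have GD: "(G has_derivative D) (at x)" using Gd frechet_derivative_works D_def by blast
  define L :: "real^'l \<Rightarrow> complex^'l" where "L y = (\<chi> j. complex_of_real (y $ j))" for y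
  have "linear L"
    by (rule linearI) (simp_all add: L_def vec_eq_iff vscaleR rvscale del: vector_scaleR_component)
  then have bL: "bounded_linear L" using linear_conv_bounded_linear by blast
  have 1: "((\<lambda>y. L (G y)) has_derivative (\<lambda>h. L (D h))) (at x)"
    by (rule bounded_linear.has_derivative[OF bL GD])
  define D\<Phi> where "D\<Phi> m = frechet_derivative (\<Phi> m) (at x)" for m
  have bm: "bounded_linear (\<lambda>a::complex. (c m * a) *s vs m)" for m
  proof -
    have "linear (\<lambda>a::complex. (c m * a) *s vs m)"
      by (rule linearI) (simp_all add: vec_eq_iff vscaleR' scaleR_conv_of_real algebra_simps)
    then show ?thesis using linear_conv_bounded_linear by blast
  qed
  have 2: "((\<lambda>y. \<Sum>m<r. (c m * \<Phi> m y) *s vs m) has_derivative (\<lambda>h. \<Sum>m<r. (c m * D\<Phi> m h) *s vs m)) (at x)"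
  proof (rule has_derivative_sum)
    fix m assume "m \<in> {..<r}"
    then have "(\<Phi> m has_derivative D\<Phi> m) (at x)"
      using \<Phi>d[of m] frechet_derivative_works[of "\<Phi> m" "at x"] unfolding D\<Phi>_def by simp
    then show "((\<lambda>y. (c m * \<Phi> m y) *s vs m) has_derivative (\<lambda>h. (c m * D\<Phi> m h) *s vs m)) (at x)"
      by (rule bounded_linear.has_derivative[OF bm])
  qed
  have fe: "(\<lambda>y. L (G y)) = (\<lambda>y. \<Sum>m<r. (c m * \<Phi> m y) *s vs m)"
    by (simp add: L_def eq)
  have "(\<lambda>h. L (D h)) = (\<lambda>h. \<Sum>m<r. (c m * D\<Phi> m h) *s vs m)"
  proof (rule has_derivative_unique[OF 1])
    show "((\<lambda>y. L (G y)) has_derivative (\<lambda>h. \<Sum>m<r. (c m * D\<Phi> m h) *s vs m)) (at x)"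
      unfolding fe by (rule 2)
  qed
  then have "\<And>h. L (D h) = (\<Sum>m<r. (c m * D\<Phi> m h) *s vs m)"
    by (rule fun_cong)
  then have "\<And>h j. complex_of_real (D h $ j) = (\<Sum>m<r. c m * D\<Phi> m h * vs m $ j)"
    by (simp add: L_def vec_eq_iff)
  then show ?thesis
    by (simp add: rowgrad_def cgrad_def vec_eq_iff D_def D\<Phi>_def)
qed

lemma cstar_sum: "cstar (\<Sum>n\<in>N. A n :: complex^'n^'m) = (\<Sum>n\<in>N. cstar (A n))"
  by (simp add: cstar_def vec_eq_iff)

lemma cstar_scaleR: "cstar ((t::real) *\<^sub>R (A::complex^'n^'m)) = t *\<^sub>R cstar A"
  by (simp add: cstar_def vec_eq_iff mscaleR)

lemma mv_scaleR_mat: "((t::real) *\<^sub>R (A::complex^'n^'m)) *v u = t *\<^sub>R (A *v u)"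
  by (simp add: vec_eq_iff mscaleR vscaleR matrix_vector_mult_def sum_distrib_left algebra_simps
      del: vector_scaleR_component)

lemma mm_scaleR_right: "(A::complex^'n^'m) ** ((t::real) *\<^sub>R B) = t *\<^sub>R (A ** (B::complex^'p^'n))"
  by (simp add: vec_eq_iff matrix_matrix_mult_def scaleR_sum_right)

lemma mm_scaleR_left: "((t::real) *\<^sub>R (A::complex^'n^'m)) ** (B::complex^'p^'n) = t *\<^sub>R (A ** B)"
  by (simp add: vec_eq_iff matrix_matrix_mult_def scaleR_sum_right)

lemma w_eq: "(\<chi> j. \<Sum>i\<in>UNIV. cnj (u $ i) * (A::complex^'l^'d) $ i $ j) = (\<chi> j. cnj ((cstar A *v u) $ j))"
  by (simp add: vec_eq_iff cstar_def matrix_vector_mult_def mult.commute)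

lemma norm_sq_AA: "(norm (\<chi> j. \<Sum>i\<in>UNIV. cnj (u $ i) * (A::complex^'l^'d) $ i $ j))\<^sup>2
   = Re (cinner ((A ** cstar A) *v u) u)"
proof -
  have "(norm (\<chi> j. \<Sum>i\<in>UNIV. cnj (u $ i) * A $ i $ j))\<^sup>2 = (norm (cstar A *v u))\<^sup>2"
    by (simp only: w_eq norm_cnj_vec)
  also have "\<dots> = Re (cinner (cstar A *v u) (cstar A *v u))"
    by (simp add: cinner_self)
  also have "cinner (cstar A *v u) (cstar A *v u) = cinner u (A *v (cstar A *v u))"
    using adj_cinner[of "cstar A" u] by simp
  also have "\<dots> = cnj (cinner ((A ** cstar A) *v u) u)"
    by (simp add: cinner_commute[of u] matrix_vector_mul_assoc)
  finally show ?thesis by simp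
qed

theorem proposition1:
  fixes xs :: "nat \<Rightarrow> real^'d" and N :: nat
    and F :: "real \<Rightarrow> real^'d \<Rightarrow> real^'d"
    and g :: "real^'d \<Rightarrow> real^'l"
    and r :: nat and lam :: "nat \<Rightarrow> complex"
    and phi :: "nat \<Rightarrow> real^'d \<Rightarrow> complex"
    and vs :: "nat \<Rightarrow> complex^'l"
    and h \<sigma> :: real
    and J :: "real^'d \<Rightarrow> complex^'l^'d"
    and M S :: "complex^'d^'d"
    and Gt :: "real \<Rightarrow> nat \<Rightarrow> complex^'l^'d"
    and Jt :: "nat \<Rightarrow> complex^'l^'d"
    and f :: "complex^'d \<Rightarrow> real"
  assumes F0: "\<And>x. F 0 x = x"
    and Fsemigroup: "\<And>s t x. 0 \<le> s \<Longrightarrow> 0 \<le> t \<Longrightarrow> F (s + t) x = F s (F t x)"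
    and F_diff: "\<And>\<tau> x. 0 \<le> \<tau> \<Longrightarrow> F \<tau> differentiable (at x)"
    and g_diff: "\<And>x. g differentiable (at x)"
    and phi_diff: "\<And>m x. m < r \<Longrightarrow> phi m differentiable (at x)"
    and zero_err: "\<And>\<tau> x. 0 \<le> \<tau> \<Longrightarrow>
        (\<chi> j. complex_of_real (g (F \<tau> x) $ j)) =
        (\<Sum>m<r. (exp (complex_of_real \<tau> * lam m) * phi m x) *s vs m)"
    and J_def: "\<And>x. J x = (\<Sum>m<r. \<chi> i j. lam m * cgrad (phi m) x $ i * vs m $ j)"
    and hpos: "h > 0" and \<sigma>pos: "\<sigma> > 0"
    and M_def: "M = (1 / (h * \<sigma>)\<^sup>2) *\<^sub>R (\<Sum>n\<in>{1..N}. J (xs n) ** cstar (J (xs n)))"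
    and M_inv: "invertible M"
    and S_def: "S = msqrt M"
    and Gt_def: "\<And>\<tau> n. Gt \<tau> n = matrix_inv S ** rowgrad (\<lambda>x. g (F \<tau> x)) (xs n)"
    and Jt_def: "\<And>n. Jt n = Lim (at_right 0) (\<lambda>\<tau>. (1 / \<tau>) *\<^sub>R (Gt \<tau> n - Gt 0 n))"
    and f_def: "\<And>u. f u = (1 / real N) *
        (\<Sum>n\<in>{1..N}. (norm (\<chi> j. \<Sum>i\<in>UNIV. cnj (u $ i) * Jt n $ i $ j))\<^sup>2)"
  shows "\<exists>c. \<forall>u. norm u = 1 \<longrightarrow> f u = c"
proof -
  define c where "c = 1 / (h * \<sigma>)\<^sup>2"
  define X where "X = (\<Sum>n\<in>{1..N}. J (xs n) ** cstar (J (xs n)))"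
  have hs: "(h * \<sigma>)\<^sup>2 > 0" using hpos \<sigma>pos by simp
  have cpos: "c > 0" using hs by (simp add: c_def)
  have MX: "M = c *\<^sub>R X" using M_def by (simp add: c_def X_def)
  have XM: "X = (h * \<sigma>)\<^sup>2 *\<^sub>R M" using MX hs by (simp add: c_def)
  have hX: "cstar X = X"
    by (simp add: X_def cstar_sum cstar_mult)
  have hermM: "hermitian M"
    unfolding hermitian_def MX cstar_scaleR hX ..
  have pdM: "pos_def M"
    unfolding pos_def_def
  proof (intro allI impI)
    fix v :: "complex^'d" assume v0: "v \<noteq> 0"
    have Xv: "cinner (X *v v) v = (\<Sum>n\<in>{1..N}. of_real ((norm (cstar (J (xs n)) *v v))\<^sup>2))"
    proof -
      have "cinner (X *v v) v = (\<Sum>n\<in>{1..N}. cinner ((J (xs n) ** cstar (J (xs n))) *v v) v)"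
        by (simp add: X_def mvsum_left cinner_sum_left)
      also have "\<dots> = (\<Sum>n\<in>{1..N}. of_real ((norm (cstar (J (xs n)) *v v))\<^sup>2))"
      proof (rule sum.cong)
        fix n
        have "cinner ((J (xs n) ** cstar (J (xs n))) *v v) v
            = cinner (J (xs n) *v (cstar (J (xs n)) *v v)) v"
          by (simp add: matrix_vector_mul_assoc)
        also have "\<dots> = cinner (cstar (J (xs n)) *v v) (cstar (J (xs n)) *v v)"
          by (rule adj_cinner)
        finally show "cinner ((J (xs n) ** cstar (J (xs n))) *v v) v = of_real ((norm (cstar (J (xs n)) *v v))\<^sup>2)"
          by (simp add: cinner_self)
      qed simp
      finally show ?thesis .
    qed
    have "M *v v = c *\<^sub>R (X *v v)" by (simp add: MX mv_scaleR_mat)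
    then have Mvv: "Re (cinner (M *v v) v) = c * (\<Sum>n\<in>{1..N}. (norm (cstar (J (xs n)) *v v))\<^sup>2)"
      by (simp add: cinner_scaleR_left Xv Re_sum)
    have nn: "0 \<le> (\<Sum>n\<in>{1..N}. (norm (cstar (J (xs n)) *v v))\<^sup>2)"
      by (simp add: sum_nonneg)
    have "(\<Sum>n\<in>{1..N}. (norm (cstar (J (xs n)) *v v))\<^sup>2) \<noteq> 0"
    proof
      assume z: "(\<Sum>n\<in>{1..N}. (norm (cstar (J (xs n)) *v v))\<^sup>2) = 0"
      have "\<forall>n\<in>{1..N}. (norm (cstar (J (xs n)) *v v))\<^sup>2 = 0"
        using z by (subst (asm) sum_nonneg_eq_0_iff) auto
      then have "\<forall>n\<in>{1..N}. cstar (J (xs n)) *v v = 0" by simp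
      then have "X *v v = 0"
        by (simp add: X_def mvsum_left matrix_vector_mul_assoc[symmetric])
      then have Mv0: "M *v v = M *v 0" by (simp add: MX mv_scaleR_mat)
      have "v = 0" using inj_matrix_vector_mult[OF M_inv] Mv0 unfolding inj_def by blast
      then show False using v0 by simp
    qed
    then have "0 < c * (\<Sum>n\<in>{1..N}. (norm (cstar (J (xs n)) *v v))\<^sup>2)"
      using nn cpos by simp
    then show "0 < Re (\<Sum>i\<in>UNIV. \<Sum>j\<in>UNIV. cnj (v $ i) * M $ i $ j * v $ j)"
      by (simp add: qf_cinner Mvv)
  qed
  have hS: "hermitian S" and pS: "pos_def S" and SS: "S ** S = M"
    using msqrt_props[OF hermM pdM] S_def by auto
  obtain Mi where "M ** Mi = mat 1" using M_inv unfolding invertible_def by blast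
  then have "S ** (S ** Mi) = mat 1" by (simp add: matrix_mul_assoc SS)
  then have invS: "invertible S" using invertible_right_inverse by blast
  define K where "K = matrix_inv S"
  have SK: "S ** K = mat 1" and KS: "K ** S = mat 1"
  proof -
    have "S ** K = mat 1 \<and> K ** S = mat 1"
      using invS unfolding invertible_def K_def matrix_inv_def by (rule someI_ex)
    then show "S ** K = mat 1" "K ** S = mat 1" by auto
  qed
  have hK: "cstar K = K"
  proof -
    have "cstar K ** S = mat 1"
      using hS SK unfolding hermitian_def by (metis cstar_mult cstar_mat1)
    have "cstar K = cstar K ** (S ** K)" by (simp add: SK)
    also have "\<dots> = (cstar K ** S) ** K" by (rule matrix_mul_assoc)
    also have "\<dots> = K" using \<open>cstar K ** S = mat 1\<close> by simp
    finally show ?thesis .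
  qed
  have KMK: "K ** M ** K = mat 1"
    by (simp add: SS[symmetric] matrix_mul_assoc[symmetric]) (simp add: matrix_mul_assoc KS SK)
  define a where "a n m k = cgrad (phi m) (xs n) $ k" for n m k
  define R where "R \<tau> n = (\<chi> i j. \<Sum>m<r. exp (complex_of_real \<tau> * lam m) * a n m i * vs m $ j)" for \<tau> n
  have GtR: "Gt \<tau> n = K ** R \<tau> n" if t: "0 \<le> \<tau>" for \<tau> n
  proof -
    have "rowgrad (\<lambda>x. g (F \<tau> x)) (xs n) = R \<tau> n"
      unfolding R_def a_def
    proof (rule rowgrad_eq[where c = "\<lambda>m. exp (complex_of_real \<tau> * lam m)"])
      show "(\<lambda>x. g (F \<tau> x)) differentiable at (xs n)"
        using differentiable_chain_at[OF F_diff[OF t] g_diff] by (simp add: o_def)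
      show "\<And>m. m < r \<Longrightarrow> phi m differentiable at (xs n)" by (rule phi_diff)
      show "\<And>y. (\<chi> j. complex_of_real (g (F \<tau> y) $ j)) = (\<Sum>m<r. (exp (complex_of_real \<tau> * lam m) * phi m y) *s vs m)"
        by (rule zero_err[OF t])
    qed
    then show ?thesis by (simp add: Gt_def K_def)
  qed
  have JtK: "Jt n = K ** J (xs n)" for n
  proof -
    define q where "q \<tau> m = complex_of_real (1/\<tau>) * (exp (complex_of_real \<tau> * lam m) - 1)" for \<tau> m
    define Q where "Q \<tau> = (\<chi> i j. \<Sum>k\<in>UNIV. K$i$k * (\<Sum>m<r. q \<tau> m * a n m k * vs m $ j))" for \<tau>
    have ev: "\<forall>\<^sub>F \<tau> in at_right 0. (1/\<tau>) *\<^sub>R (Gt \<tau> n - Gt 0 n) = Q \<tau>"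
      using eventually_at_right_less[of "0::real"]
    proof (rule eventually_mono)
      fix \<tau> :: real assume "0 < \<tau>"
      then have G: "Gt \<tau> n = K ** R \<tau> n" "Gt 0 n = K ** R 0 n" using GtR by auto
      have "((1/\<tau>) *\<^sub>R (K ** R \<tau> n - K ** R 0 n)) $ i $ j = Q \<tau> $ i $ j" for i j
      proof -
        have "((1/\<tau>) *\<^sub>R (K ** R \<tau> n - K ** R 0 n)) $ i $ j
            = complex_of_real (1/\<tau>) * (\<Sum>k\<in>UNIV. K$i$k * R \<tau> n $k$j - K$i$k * R 0 n $k$j)"
          by (simp only: mscaleR) (simp add: matrix_matrix_mult_def sum_subtractf)
        also have "\<dots> = (\<Sum>k\<in>UNIV. K$i$k * (complex_of_real (1/\<tau>) * (R \<tau> n $k$j - R 0 n $k$j)))"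
          by (simp add: sum_distrib_left algebra_simps)
        also have "\<dots> = Q \<tau> $ i $ j"
        proof -
          have "complex_of_real (1/\<tau>) * (R \<tau> n $k$j - R 0 n $k$j) = (\<Sum>m<r. q \<tau> m * a n m k * vs m $ j)" for k
            by (simp add: R_def q_def sum_subtractf[symmetric] sum_distrib_left algebra_simps)
          then show ?thesis by (simp add: Q_def)
        qed
        finally show ?thesis .
      qed
      then show "(1/\<tau>) *\<^sub>R (Gt \<tau> n - Gt 0 n) = Q \<tau>" by (simp add: G vec_eq_iff)
    qed
    have Jent: "(K ** J (xs n)) $ i $ j = (\<Sum>k\<in>UNIV. K$i$k * (\<Sum>m<r. lam m * a n m k * vs m $ j))" for i j
      by (simp add: matrix_matrix_mult_def J_def a_def mult.assoc)
    have "(Q \<longlongrightarrow> K ** J (xs n)) (at_right 0)"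
    proof (rule vec_tendstoI, rule vec_tendstoI)
      fix i j
      have "((\<lambda>\<tau>. \<Sum>k\<in>UNIV. K$i$k * (\<Sum>m<r. q \<tau> m * a n m k * vs m $ j)) \<longlongrightarrow>
             (\<Sum>k\<in>UNIV. K$i$k * (\<Sum>m<r. lam m * a n m k * vs m $ j))) (at_right 0)"
        unfolding q_def
        by (intro tendsto_sum tendsto_mult_left tendsto_mult_right exp_lim)
      then show "((\<lambda>\<tau>. Q \<tau> $ i $ j) \<longlongrightarrow> (K ** J (xs n)) $ i $ j) (at_right 0)"
        by (simp add: Q_def Jent)
    qed
    then have "((\<lambda>\<tau>. (1/\<tau>) *\<^sub>R (Gt \<tau> n - Gt 0 n)) \<longlongrightarrow> K ** J (xs n)) (at_right 0)"
      using tendsto_cong[OF ev] by blast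
    then show ?thesis
      unfolding Jt_def by (rule tendsto_Lim[OF trivial_limit_at_right_real])
  qed
  have final: "f u = (1 / real N) * (h * \<sigma>)\<^sup>2" if nu: "norm u = 1" for u
  proof -
    have "(\<Sum>n\<in>{1..N}. (norm (\<chi> j. \<Sum>i\<in>UNIV. cnj (u $ i) * Jt n $ i $ j))\<^sup>2)
        = (\<Sum>n\<in>{1..N}. Re (cinner (((K ** J (xs n)) ** cstar (K ** J (xs n))) *v u) u))"
      by (simp add: JtK norm_sq_AA)
    also have "\<dots> = Re (cinner ((\<Sum>n\<in>{1..N}. (K ** J (xs n)) ** cstar (K ** J (xs n))) *v u) u)"
      by (simp add: mvsum_left cinner_sum_left Re_sum)
    also have "(\<Sum>n\<in>{1..N}. (K ** J (xs n)) ** cstar (K ** J (xs n))) = K ** X ** K"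
      by (simp add: X_def cstar_mult hK msum_left msum_right matrix_mul_assoc)
    also have "K ** X ** K = (h * \<sigma>)\<^sup>2 *\<^sub>R mat 1"
      by (simp add: XM mm_scaleR_left mm_scaleR_right KMK)
    also have "Re (cinner (((h * \<sigma>)\<^sup>2 *\<^sub>R mat 1) *v u) u) = (h * \<sigma>)\<^sup>2"
      using nu by (simp add: mv_scaleR_mat cinner_scaleR_left cinner_self)
    finally show ?thesis by (simp add: f_def)
  qed
  show ?thesis using final by blast
qed

end
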